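(* Assume the setup in the context, with the fine-tuning regime and local smoothness with radius $r\ge 2\sqrt{C}$. Let $0<\epsilon\le 1$ be such that $|\langle\tau_i,\tau_j\rangle|\le\epsilon\|\tau_i\|\|\tau_j\|$ for all $i\neq j$. Fix $i\in[T]$ and $\alpha_i\in[0,1]$, and let $\theta_{\mathrm{Neg},i}=\theta_0-\alpha_i\tau_i$. Then for every $j\in[T]$ with $j\neq i$, $$\mathcal{L}_j(\theta_{\mathrm{Neg},i})-\mathcal{L}_j(\theta_0)\le L_jC\Big(\frac{3}{2}+\epsilon\Big).$$
   Context: Setup: $\theta_0\in\mathbb{R}^d$ is a pretrained parameter vector; $\theta_1,\dots,\theta_T\in\mathbb{R}^d$ are fine-tuned parameters and $\tau_i:=\theta_i-\theta_0$ are task vectors. For each task $i$, $\mathcal{L}_i:\mathbb{R}^d\to\mathbb{R}$ is a differentiable loss (population risk). Norms are Euclidean. Fine-tuning regime: $\nabla\mathcal{L}_i(\theta_i)=0$ for all $i\in[T]$, and there is $C>0$ with $\|\tau_i\|^2\le C$ for all $i$. Local smoothness with radius $r>0$: for each $i$ there is $L_i\ge 0$ such that for all $\theta$ with $\|\theta-\theta_i\|\le r$, $\big|\mathcal{L}_i(\theta)-\mathcal{L}_i(\theta_i)-\langle\theta-\theta_i,\nabla\mathcal{L}_i(\theta_i)\rangle\big|\le\frac{L_i}{2}\|\theta-\theta_i\|^2$. *)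

theory Defs
  imports "HOL-Analysis.Analysis"
begin

end

theory Submission
  imports Defs
begin

theorem mainTheorem7:
  fixes T :: nat
    and theta0 :: "'a::euclidean_space"
    and theta :: "nat \<Rightarrow> 'a"
    and Loss :: "nat \<Rightarrow> 'a \<Rightarrow> real"
    and grad :: "nat \<Rightarrow> 'a \<Rightarrow> 'a"
    and Lsm :: "nat \<Rightarrow> real"
    and C r eps alpha :: real
    and i j :: nat
  assumes diff: "\<And>k x. k \<in> {1..T} \<Longrightarrow> GDERIV (Loss k) x :> grad k x"
    and stationary: "\<And>k. k \<in> {1..T} \<Longrightarrow> grad k (theta k) = 0"
    and Cpos: "C > 0"
    and taubound: "\<And>k. k \<in> {1..T} \<Longrightarrow> (norm (theta k - theta0))\<^sup>2 \<le> C"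
    and rpos: "r > 0"
    and rbig: "r \<ge> 2 * sqrt C"
    and Lsm_nonneg: "\<And>k. k \<in> {1..T} \<Longrightarrow> Lsm k \<ge> 0"
    and smooth: "\<And>k x. k \<in> {1..T} \<Longrightarrow> norm (x - theta k) \<le> r \<Longrightarrow>
        \<bar>Loss k x - Loss k (theta k) - inner (x - theta k) (grad k (theta k))\<bar>
          \<le> Lsm k / 2 * (norm (x - theta k))\<^sup>2"
    and eps_pos: "0 < eps" and eps_le: "eps \<le> 1"
    and orth: "\<And>k l. k \<in> {1..T} \<Longrightarrow> l \<in> {1..T} \<Longrightarrow> k \<noteq> l \<Longrightarrow>
        \<bar>inner (theta k - theta0) (theta l - theta0)\<bar>
          \<le> eps * norm (theta k - theta0) * norm (theta l - theta0)"
    and i_in: "i \<in> {1..T}"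
    and alpha: "alpha \<in> {0..1}"
    and j_in: "j \<in> {1..T}" and ji: "j \<noteq> i"
  shows "Loss j (theta0 - alpha *\<^sub>R (theta i - theta0)) - Loss j theta0
           \<le> Lsm j * C * (3/2 + eps)"
proof -
  define a where "a = theta i - theta0"
  define b where "b = theta j - theta0"
  have ga: "grad j (theta j) = 0" using stationary j_in by blast
  have a2: "(norm a)^2 \<le> C" using taubound i_in a_def by blast
  have b2: "(norm b)^2 \<le> C" using taubound j_in b_def by blast
  have na: "norm a \<le> sqrt C" using a2 real_le_rsqrt by blast
  have nb: "norm b \<le> sqrt C" using b2 real_le_rsqrt by blast
  have ab: "\<bar>inner a b\<bar> \<le> eps * norm a * norm b" using orth[OF i_in j_in ji[symmetric]] a_def b_def by blast
  have a0: "0 \<le> alpha" "alpha \<le> 1" using alpha by auto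
  define u where "u = theta0 - alpha *\<^sub>R a - theta j"
  have u: "u = - (alpha *\<^sub>R a) - b" unfolding u_def b_def by (simp add: algebra_simps)
  have nu: "norm u \<le> alpha * norm a + norm b"
    unfolding u using norm_triangle_ineq4[of "- (alpha *\<^sub>R a)" b] a0 by simp
  have "alpha * norm a \<le> sqrt C" using na a0
    by (meson mult_left_le_one_le norm_ge_zero order_trans mult_le_one)
  hence nur: "norm u \<le> r" using nu nb rbig by linarith
  have t0: "theta0 - theta j = - b" unfolding b_def by simp
  have nbr: "norm (theta0 - theta j) \<le> r" using t0 nb rbig
    by (smt (verit, best) norm_minus_cancel real_sqrt_ge_zero Cpos)
  have s1: "Loss j (theta0 - alpha *\<^sub>R a) - Loss j (theta j) \<le> Lsm j / 2 * (norm u)^2"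
    proof -
    have "\<bar>Loss j (theta0 - alpha *\<^sub>R a) - Loss j (theta j)\<bar> \<le> Lsm j / 2 * (norm u)^2"
      using smooth[OF j_in, of "theta0 - alpha *\<^sub>R a"] nur ga u_def by simp
    thus ?thesis by linarith
  qed
  have s2: "Loss j (theta j) - Loss j theta0 \<le> Lsm j / 2 * (norm b)^2"
    proof -
    have "\<bar>Loss j theta0 - Loss j (theta j)\<bar> \<le> Lsm j / 2 * (norm b)^2"
      using smooth[OF j_in, of theta0] nbr ga t0 by simp
    thus ?thesis by linarith
  qed
  have "(norm u)^2 = alpha^2 * (norm a)^2 + 2 * alpha * inner a b + (norm b)^2"
    unfolding u power2_norm_eq_inner by (simp add: algebra_simps inner_commute power2_eq_square)
  also have "\<dots> \<le> 1 * C + 2 * alpha * (eps * norm a * norm b) + C"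
  proof -
    have "alpha^2 * (norm a)^2 \<le> 1 * C" using a2 a0 by (intro mult_mono) (auto simp: power_le_one)
    moreover have "alpha * inner a b \<le> alpha * (eps * norm a * norm b)"
      using ab a0 by (intro mult_left_mono) auto
    ultimately show ?thesis using b2 by linarith
  qed
  also have "\<dots> \<le> C + 2 * (eps * C) + C"
  proof -
    have "norm a * norm b \<le> sqrt C * sqrt C" using na nb Cpos by (intro mult_mono) auto
    hence "norm a * norm b \<le> C" using Cpos by simp
    hence "eps * (norm a * norm b) \<le> eps * C" using eps_pos by (intro mult_left_mono) auto
    moreover have "0 \<le> eps * (norm a * norm b)" using eps_pos by simp
    hence "alpha * (eps * (norm a * norm b)) \<le> eps * C"
      using a0 \<open>eps * (norm a * norm b) \<le> eps * C\<close> by (meson mult_left_le_one_le order_trans)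
    ultimately show ?thesis by (simp add: mult.assoc)
  qed
  finally have u2: "(norm u)^2 \<le> 2 * C + 2 * eps * C" by simp
  have Lj: "Lsm j \<ge> 0" using Lsm_nonneg j_in by blast
  have "Lsm j / 2 * (norm u)^2 + Lsm j / 2 * (norm b)^2 \<le> Lsm j / 2 * ((2 * C + 2 * eps * C) + C)"
    using u2 b2 Lj by (simp add: distrib_left[symmetric] mult_left_mono)
  also have "\<dots> = Lsm j * C * (3/2 + eps)" by (simp add: algebra_simps)
  finally show ?thesis using s1 s2 unfolding a_def by linarith
qed

end
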